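(* Let $X_1,X_2,\dots$ be i.i.d. $\mathbb{Z}$-valued random variables on $(\Omega,\mathcal{F},P)$, $S_n=\sum_{j=1}^nX_j$, satisfying (A1), and suppose there exist $c_*>0$ and $\varepsilon>0$ with $\phi(\theta)=1-c_*|\theta|+O(|\theta|^{1+\varepsilon})$ as $\theta\to0$. Then there exist $C_2>0$ and $N_2\in\mathbb{N}$ such that for all $n\ge N_2$, $$\sup_{l\in\mathbb{Z}}\left|nP\{S_n=l\}-\frac{1}{\pi}\frac{c_*}{c_*^2+(l/n)^2}\right|\le C_2n^{-\delta},$$ where $\delta=\min\{\varepsilon/2,1/2\}$.
   Context: $\phi(\theta)=\sum_{k\in\mathbb{Z}}e^{i\theta k}P\{X_1=k\}$. (A1) For each $y\in\mathbb{Z}$, the smallest subgroup of $\mathbb{Z}$ containing $\{y+k:P\{X_1=k\}>0\}$ is $\mathbb{Z}$. *)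

theory Defs
  imports "HOL-Probability.Probability" "HOL-Library.Landau_Symbols"
begin

definition int_subgroup_generated :: "int set \<Rightarrow> int set" where
  "int_subgroup_generated A =
     \<Inter>{H. 0 \<in> H \<and> (\<forall>x\<in>H. \<forall>y\<in>H. x - y \<in> H) \<and> A \<subseteq> H}"

definition int_charfun :: "'a measure \<Rightarrow> ('a \<Rightarrow> int) \<Rightarrow> real \<Rightarrow> complex" where
  "int_charfun M Y \<theta> =
     (\<Sum>\<^sub>\<infinity>k\<in>(UNIV::int set). cis (\<theta> * of_int k) * complex_of_real (measure M {\<omega>\<in>space M. Y \<omega> = k}))"

definition aperiodic_A1 :: "'a measure \<Rightarrow> ('a \<Rightarrow> int) \<Rightarrow> bool" where
  "aperiodic_A1 M Y \<longleftrightarrow>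
     (\<forall>y::int. int_subgroup_generated {y + k | k. measure M {\<omega>\<in>space M. Y \<omega> = k} > 0} = UNIV)"

end

theory Submission
  imports Defs
begin

lemma cos_exp_half1:
  fixes a l :: real assumes a: "a > 0" and sl: "sin (l*pi) = 0"
  shows "((\<lambda>\<theta>. exp (-a*\<bar>\<theta>\<bar>) * cos (\<theta>*l)) has_integral
          ((a - exp (-a*pi) * a * cos (l*pi)) / (a\<^sup>2 + l\<^sup>2))) {0..pi}"
proof -
  have d: "a\<^sup>2 + l\<^sup>2 > 0" using a by (simp add: add_pos_nonneg)
  define F where "F \<theta> = exp (-a*\<theta>) * (l * sin (l*\<theta>) - a * cos (l*\<theta>)) / (a\<^sup>2 + l\<^sup>2)" for \<theta>
  have "((\<lambda>\<theta>. exp (-a*\<theta>) * cos (\<theta>*l)) has_integral (F pi - F 0)) {0..pi}"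
  proof (rule fundamental_theorem_of_calculus)
    fix x assume "x \<in> {0..pi}"
    show "(F has_vector_derivative exp (-a*x) * cos (x*l)) (at x within {0..pi})"
      unfolding F_def has_real_derivative_iff_has_vector_derivative[symmetric]
      apply (rule derivative_eq_intros refl | simp)+
      subgoal using a by simp
      using d apply (simp add: divide_simps)
      apply (simp add: algebra_simps power2_eq_square)
      using a by simp
  qed simp
  moreover have "F pi - F 0 = (a - exp (-a*pi) * a * cos (l*pi)) / (a\<^sup>2 + l\<^sup>2)"
    unfolding F_def using sl d apply (simp add: mult.commute field_simps) by (simp add: add_divide_distrib[symmetric])
  ultimately show ?thesis by (rule_tac has_integral_eq[rotated]) auto
qed

lemma cos_exp_half2:
  fixes a l :: real assumes a: "a > 0" and sl: "sin (l*pi) = 0"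
  shows "((\<lambda>\<theta>. exp (-a*\<bar>\<theta>\<bar>) * cos (\<theta>*l)) has_integral
          ((a - exp (-a*pi) * a * cos (l*pi)) / (a\<^sup>2 + l\<^sup>2))) {-pi..0}"
proof -
  have d: "a\<^sup>2 + l\<^sup>2 > 0" using a by (simp add: add_pos_nonneg)
  define F where "F \<theta> = exp (a*\<theta>) * (a * cos (l*\<theta>) + l * sin (l*\<theta>)) / (a\<^sup>2 + l\<^sup>2)" for \<theta>
  have "((\<lambda>\<theta>. exp (a*\<theta>) * cos (\<theta>*l)) has_integral (F 0 - F (-pi))) {-pi..0}"
  proof (rule fundamental_theorem_of_calculus)
    fix x assume "x \<in> {-pi..0}"
    show "(F has_vector_derivative exp (a*x) * cos (x*l)) (at x within {-pi..0})"
      unfolding F_def has_real_derivative_iff_has_vector_derivative[symmetric]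
      apply (rule derivative_eq_intros refl | simp)+
      subgoal using a by simp
      using d apply (simp add: divide_simps)
      apply (simp add: algebra_simps power2_eq_square)
      using a by simp
  qed simp
  moreover have "F 0 - F (-pi) = (a - exp (-a*pi) * a * cos (l*pi)) / (a\<^sup>2 + l\<^sup>2)"
    unfolding F_def using sl d apply (simp add: mult.commute field_simps) by (simp add: add_divide_distrib[symmetric])
  ultimately show ?thesis by (rule_tac has_integral_eq[rotated]) auto
qed

lemma cos_exp_int:
  fixes a :: real and l :: int assumes a: "a > 0"
  shows "((\<lambda>\<theta>. exp (-a*\<bar>\<theta>\<bar>) * cos (\<theta>* of_int l)) has_integral
          (2*a*(1 - exp (-a*pi) * cos (of_int l*pi)) / (a\<^sup>2 + (of_int l)\<^sup>2))) {-pi..pi}"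
proof -
  have sl: "sin (of_int l*pi) = 0" by (metis mult.commute sin_npi_int)
  have "((\<lambda>\<theta>. exp (-a*\<bar>\<theta>\<bar>) * cos (\<theta>* of_int l)) has_integral
          ((a - exp (-a*pi) * a * cos (of_int l*pi)) / (a\<^sup>2 + (of_int l)\<^sup>2)
          + (a - exp (-a*pi) * a * cos (of_int l*pi)) / (a\<^sup>2 + (of_int l)\<^sup>2))) {-pi..pi}"
    by (rule has_integral_combine[OF _ _ cos_exp_half2[OF a sl] cos_exp_half1[OF a sl]]) auto
  then show ?thesis by (simp add: field_simps)
qed

lemma cos_int_integral:
  fixes m :: int
  shows "((\<lambda>\<theta>. cos (\<theta> * of_int m)) has_integral (if m = 0 then 2*pi else 0)) {-pi..pi}"
proof (cases "m = 0")
  case True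
  then show ?thesis using has_integral_const_real[of "1::real" "-pi" pi] by simp
next
  case False
  define F :: "real \<Rightarrow> real" where "F \<theta> = sin (\<theta> * of_int m) / of_int m" for \<theta>
  have "((\<lambda>\<theta>. cos (\<theta> * of_int m)) has_integral (F pi - F (-pi))) {-pi..pi}"
  proof (rule fundamental_theorem_of_calculus)
    fix x assume "x \<in> {-pi..pi}"
    show "(F has_vector_derivative cos (x * of_int m)) (at x within {-pi..pi})"
      unfolding F_def has_real_derivative_iff_has_vector_derivative[symmetric]
      using False by (auto intro!: derivative_eq_intros simp: field_simps)
  qed simp
  moreover have "F pi - F (-pi) = 0" unfolding F_def by (simp add: mult.commute)
  ultimately show ?thesis using False by simp
qed

lemma lborel_from_has_integral:
  fixes f :: "real \<Rightarrow> real"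
  assumes "continuous_on {-pi..pi} f" "(f has_integral I) {-pi..pi}"
  shows "integrable lborel (\<lambda>x. indicator {-pi..pi} x * f x)"
    and "integral\<^sup>L lborel (\<lambda>x. indicator {-pi..pi} x * f x) = I"
proof -
  have si: "set_integrable lborel {-pi..pi} f"
    unfolding set_integrable_def using borel_integrable_compact[OF _ assms(1)] by simp
  then show "integrable lborel (\<lambda>x. indicator {-pi..pi} x * f x)"
    unfolding set_integrable_def by simp
  have "(LINT x : {-pi..pi} | lborel. f x) = integral {-pi..pi} f"
    by (rule set_borel_integral_eq_integral(2)[OF si])
  then show "integral\<^sup>L lborel (\<lambda>x. indicator {-pi..pi} x * f x) = I"
    using assms(2) unfolding set_lebesgue_integral_def by (simp add: integral_unique)
qed

lemma norm_power_diff_le: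
  fixes z w :: complex
  assumes "norm z \<le> B" "norm w \<le> B"
  shows "norm (z ^ Suc n - w ^ Suc n) \<le> real (Suc n) * B ^ n * norm (z - w)"
proof (induction n)
  case 0 then show ?case by simp
next
  case (Suc n)
  have B0: "B \<ge> 0" using assms(1) norm_ge_zero order_trans by blast
  have "z ^ Suc (Suc n) - w ^ Suc (Suc n) = z * (z ^ Suc n - w ^ Suc n) + w ^ Suc n * (z - w)"
    by (simp add: algebra_simps)
  then have "norm (z ^ Suc (Suc n) - w ^ Suc (Suc n)) \<le> norm z * norm (z ^ Suc n - w ^ Suc n) + norm w ^ Suc n * norm (z - w)"
    by (metis norm_mult norm_power norm_triangle_ineq)
  also have "\<dots> \<le> B * (real (Suc n) * B ^ n * norm (z - w)) + B ^ Suc n * norm (z - w)"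
    apply (intro add_mono mult_mono Suc power_mono assms) using B0 by auto
  also have "\<dots> = real (Suc (Suc n)) * B ^ Suc n * norm (z - w)" by (simp add: algebra_simps)
  finally show ?case .
qed

lemma exp_neg_quad:
  fixes x :: real assumes "x \<ge> 0"
  shows "\<bar>1 - x - exp (-x)\<bar> \<le> x\<^sup>2 / 2"
proof -
  have l: "1 - x \<le> exp (-x)" using exp_ge_add_one_self[of "-x"] by simp
  have e: "1 + x + x\<^sup>2/2 \<le> exp x" using assms by (rule exp_lower_Taylor_quadratic)
  have p: "1 + x + x\<^sup>2/2 > 0" using assms by (simp add: add_pos_nonneg)
  have "exp (-x) = 1 / exp x" by (simp add: exp_minus inverse_eq_divide)
  also have "\<dots> \<le> 1 / (1 + x + x\<^sup>2/2)" using e p by (simp add: frac_le)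
  also have "\<dots> \<le> 1 - x + x\<^sup>2/2"
  proof -
    have x4: "0 \<le> x*(x*(x*x))" using assms by simp
    have "1 \<le> (1 - x + x\<^sup>2/2) * (1 + x + x\<^sup>2/2)" using x4 by (simp add: algebra_simps power2_eq_square power4_eq_xxxx)
    then show ?thesis using p by (simp add: divide_simps)
  qed
  finally show ?thesis using l by simp
qed

lemma powr_exp_bound:
  fixes u b s :: real assumes "u \<ge> 0" "b > 0" "1 \<le> s" "s \<le> 2"
  shows "u powr s * exp (-b*u) \<le> 1/b + 2/b\<^sup>2"
proof -
  have us: "u powr s \<le> u + u\<^sup>2"
  proof (cases "u \<le> 1")
    case True
    then have "u powr s \<le> u powr 1" using assms by (intro powr_mono') auto
    then show ?thesis using assms by (smt (verit) zero_le_power2 powr_one_gt_zero_iff powr_one)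
  next
    case False
    then have "u powr s \<le> u powr 2" using assms by (intro powr_mono) auto
    then show ?thesis using assms False by (simp add: powr_numeral)
  qed
  have e: "1 + b*u + (b*u)\<^sup>2/2 \<le> exp (b*u)" using assms by (intro exp_lower_Taylor_quadratic) simp
  have "b*u \<le> exp (b*u)" using e assms by (smt (verit) zero_le_power2 divide_nonneg_pos)
  have "(b*u)\<^sup>2/2 \<le> exp (b*u)" using e assms by (smt (verit) mult_nonneg_nonneg)
  note this \<open>b*u \<le> exp (b*u)\<close>
  then have "(b*u)\<^sup>2/2 \<le> exp (b*u)" "b*u \<le> exp (b*u)" by auto
  then have "u \<le> exp (b*u) / b" "u\<^sup>2 \<le> 2 * exp (b*u) / b\<^sup>2"
    using assms by (auto simp: field_simps power_mult_distrib)
  then have "u + u\<^sup>2 \<le> exp (b*u) * (1/b + 2/b\<^sup>2)" by (simp add: field_simps)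
  with us have "u powr s \<le> exp (b*u) * (1/b + 2/b\<^sup>2)" by linarith
  then show ?thesis by (simp add: exp_minus field_simps)
qed

lemma int_charfun_eq:
  fixes Z :: "'a \<Rightarrow> int"
  assumes P: "prob_space M" and Zm: "Z \<in> measurable M (count_space UNIV)"
  shows "int_charfun M Z \<theta> = (\<integral>\<omega>. cis (\<theta> * of_int (Z \<omega>)) \<partial>M)"
proof -
  interpret prob_space M by (rule P)
  define p where "p k = measure M {\<omega>\<in>space M. Z \<omega> = k}" for k
  define D where "D = distr M (count_space UNIV) Z"
  have PD: "prob_space D" unfolding D_def using Zm by (rule prob_space_distr)
  have Deq: "D = density (count_space UNIV) (\<lambda>k. ennreal (p k))"
  proof (rule measure_eqI_countable'[where A=UNIV])
    fix a :: int
    have "emeasure D {a} = emeasure M (Z -` {a} \<inter> space M)"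
      unfolding D_def using Zm by (simp add: emeasure_distr)
    also have "Z -` {a} \<inter> space M = {\<omega>\<in>space M. Z \<omega> = a}" by auto
    also have "emeasure M {\<omega>\<in>space M. Z \<omega> = a} = ennreal (p a)"
      unfolding p_def by (rule emeasure_eq_measure)
    finally show "emeasure D {a} = emeasure (density (count_space UNIV) (\<lambda>k. ennreal (p k))) {a}"
      by (simp add: emeasure_density)
  qed (auto simp: D_def)
  define f where "f k = cis (\<theta> * of_int k)" for k :: int
  have intD: "integrable D f"
    by (rule finite_measure.integrable_const_bound[where B=1])
       (use PD in \<open>auto simp: prob_space_def f_def D_def\<close>)
  have p0: "p k \<ge> 0" for k unfolding p_def by simp
  have "(\<integral>\<omega>. cis (\<theta> * of_int (Z \<omega>)) \<partial>M) = integral\<^sup>L D f"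
    unfolding D_def f_def using Zm by (simp add: integral_distr)
  also have "\<dots> = integral\<^sup>L (count_space UNIV) (\<lambda>k. p k *\<^sub>R f k)"
    unfolding Deq by (rule integral_density) (auto simp: p0)
  also have "\<dots> = infsetsum (\<lambda>k. p k *\<^sub>R f k) UNIV"
    by (simp add: infsetsum_def)
  also have "\<dots> = infsum (\<lambda>k. p k *\<^sub>R f k) UNIV"
  proof (rule infsetsum_infsum)
    have "integrable (density (count_space UNIV) (\<lambda>k. ennreal (p k))) f" using intD Deq by simp
    then have "integrable (count_space UNIV) (\<lambda>k. p k *\<^sub>R f k)"
      by (subst (asm) integrable_density) (auto simp: p0)
    then show "Infinite_Set_Sum.abs_summable_on (\<lambda>k. p k *\<^sub>R f k) UNIV" by (simp add: Infinite_Set_Sum.abs_summable_on_def)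
  qed
  also have "\<dots> = int_charfun M Z \<theta>"
    unfolding int_charfun_def f_def p_def by (simp add: scaleR_conv_of_real mult.commute)
  finally show ?thesis ..
qed

lemma cis_sum: "cis (sum f A) = (\<Prod>a\<in>A. cis (f a))"
  by (induction A rule: infinite_finite_induct) (auto simp: cis_mult[symmetric])

locale setting =
  fixes M :: "'a measure" and X :: "nat \<Rightarrow> 'a \<Rightarrow> int"
  assumes P: "prob_space M"
    and meas: "\<And>j. j \<ge> 1 \<Longrightarrow> X j \<in> measurable M (count_space UNIV)"
    and indep: "prob_space.indep_vars M (\<lambda>_. count_space UNIV) X {1..}"
    and ident: "\<And>j. j \<ge> 1 \<Longrightarrow>
                  distr M (count_space UNIV) (X j) = distr M (count_space UNIV) (X 1)"
begin

sublocale prob_space M by (rule P)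

definition S :: "nat \<Rightarrow> 'a \<Rightarrow> int" where "S n \<omega> = (\<Sum>j\<in>{1..n}. X j \<omega>)"
definition \<psi> :: "real \<Rightarrow> complex" where "\<psi> \<theta> = (\<integral>\<omega>. cis (\<theta> * of_int (X 1 \<omega>)) \<partial>M)"

lemma Xr_meas[measurable]: "j \<ge> 1 \<Longrightarrow> (\<lambda>\<omega>. real_of_int (X j \<omega>)) \<in> borel_measurable M"
  using measurable_compose[OF meas[of j], of "real_of_int" borel] by (simp add: comp_def)

lemma Sr_meas[measurable]: "(\<lambda>\<omega>. real_of_int (S n \<omega>)) \<in> borel_measurable M"
  unfolding S_def of_int_sum by (intro borel_measurable_sum) auto

lemma cis_X_integral: "j \<ge> 1 \<Longrightarrow> (\<integral>\<omega>. cis (\<theta> * of_int (X j \<omega>)) \<partial>M) = \<psi> \<theta>"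
proof -
  assume j: "j \<ge> 1"
  have "(\<integral>\<omega>. cis (\<theta> * of_int (X j \<omega>)) \<partial>M) = (\<integral>k. cis (\<theta> * of_int k) \<partial>distr M (count_space UNIV) (X j))"
    using meas[OF j] by (simp add: integral_distr)
  also have "\<dots> = (\<integral>k. cis (\<theta> * of_int k) \<partial>distr M (count_space UNIV) (X 1))"
    using ident[OF j] by simp
  also have "\<dots> = \<psi> \<theta>" unfolding \<psi>_def using meas[of 1] by (simp add: integral_distr)
  finally show ?thesis .
qed

lemma char_S: "(\<integral>\<omega>. cis (\<theta> * of_int (S n \<omega>)) \<partial>M) = \<psi> \<theta> ^ n"
proof -
  have ind: "indep_vars (\<lambda>_. borel) (\<lambda>j \<omega>. cis (\<theta> * of_int (X j \<omega>))) {1..n}"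
    using indep_vars_compose2[OF indep_vars_subset[OF indep, of "{1..n}"],
        of "\<lambda>j k. cis (\<theta> * of_int k)" "\<lambda>_. borel"] by auto
  have "(\<integral>\<omega>. cis (\<theta> * of_int (S n \<omega>)) \<partial>M) = (\<integral>\<omega>. (\<Prod>j\<in>{1..n}. cis (\<theta> * of_int (X j \<omega>))) \<partial>M)"
    unfolding S_def of_int_sum sum_distrib_left cis_sum ..
  also have "\<dots> = (\<Prod>j\<in>{1..n}. \<integral>\<omega>. cis (\<theta> * of_int (X j \<omega>)) \<partial>M)"
  proof (rule indep_vars_lebesgue_integral[OF _ ind])
    fix j assume "j \<in> {1..n}"
    then have j: "j \<ge> 1" by simp
    have c: "(\<lambda>x::real. cis (\<theta> * x)) \<in> borel_measurable borel"
      by (intro borel_measurable_continuous_onI continuous_intros)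
    have "(\<lambda>\<omega>. cis (\<theta> * of_int (X j \<omega>))) \<in> borel_measurable M"
      using measurable_compose[OF Xr_meas[OF j] c] by simp
    then show "integrable M (\<lambda>\<omega>. cis (\<theta> * of_int (X j \<omega>)))"
      by (intro integrable_const_bound[where B=1]) auto
  qed simp
  also have "\<dots> = (\<Prod>j\<in>{1..n}. \<psi> \<theta>)" by (intro prod.cong refl cis_X_integral) auto
  finally show ?thesis by simp
qed

lemma cos_S_integral:
  "(\<integral>\<omega>. cos (\<theta> * (real_of_int (S n \<omega>) - real_of_int l)) \<partial>M) = Re (cis (-\<theta> * of_int l) * \<psi> \<theta> ^ n)"
proof -
  have "(\<integral>\<omega>. cos (\<theta> * (real_of_int (S n \<omega>) - real_of_int l)) \<partial>M)
      = (\<integral>\<omega>. Re (cis (-\<theta> * of_int l) * cis (\<theta> * of_int (S n \<omega>))) \<partial>M)"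
  proof (rule Bochner_Integration.integral_cong[OF refl])
    fix \<omega>
    have "cis (-\<theta> * of_int l) * cis (\<theta> * of_int (S n \<omega>)) = cis (\<theta> * (real_of_int (S n \<omega>) - real_of_int l))"
      by (simp add: cis_mult algebra_simps)
    then show "cos (\<theta> * (real_of_int (S n \<omega>) - real_of_int l)) = Re (cis (-\<theta> * of_int l) * cis (\<theta> * of_int (S n \<omega>)))"
      by simp
  qed
  also have "\<dots> = Re (\<integral>\<omega>. cis (-\<theta> * of_int l) * cis (\<theta> * of_int (S n \<omega>)) \<partial>M)"
  proof (rule integral_Re, rule integrable_const_bound[where B=1])
    have c: "(\<lambda>x::real. cis (-\<theta> * of_int l) * cis (\<theta> * x)) \<in> borel_measurable borel"
      by (intro borel_measurable_continuous_onI continuous_intros)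
    show "(\<lambda>\<omega>. cis (-\<theta> * of_int l) * cis (\<theta> * of_int (S n \<omega>))) \<in> borel_measurable M"
      using measurable_compose[OF Sr_meas c] by simp
  qed (auto simp: norm_mult)
  also have "\<dots> = Re (cis (-\<theta> * of_int l) * \<psi> \<theta> ^ n)"
    by (simp add: char_S)
  finally show ?thesis .
qed

lemma pair_sf: "pair_sigma_finite M lborel"
  by (simp add: pair_sigma_finite_def sigma_finite_measure_axioms lborel.sigma_finite_measure_axioms)

lemma fubini_rep:
  fixes n :: nat and l :: int
  defines "g \<equiv> (\<lambda>\<theta>. indicator {-pi..pi} \<theta> * Re (cis (-\<theta> * of_int l) * \<psi> \<theta> ^ n))"
  shows "integrable lborel g" "integral\<^sup>L lborel g = 2 * pi * measure M {\<omega>\<in>space M. S n \<omega> = l}"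
proof -
  interpret pair_sigma_finite M lborel by (rule pair_sf)
  define f where "f \<omega> \<theta> = indicator {-pi..pi} \<theta> * cos (\<theta> * (real_of_int (S n \<omega>) - real_of_int l))" for \<omega> \<theta>
  have fm: "case_prod f \<in> borel_measurable (M \<Otimes>\<^sub>M lborel)"
    unfolding f_def by measurable
  have ii: "integrable (M \<Otimes>\<^sub>M lborel) (indicator (space M \<times> {-pi..pi}) :: _ \<Rightarrow> real)"
  proof (subst integrable_indicator_iff, intro conjI)
    show "space M \<times> {-pi..pi} \<inter> space (M \<Otimes>\<^sub>M lborel) \<in> sets (M \<Otimes>\<^sub>M lborel)" by auto
    have "emeasure (M \<Otimes>\<^sub>M lborel) (space M \<times> {-pi..pi}) = emeasure M (space M) * emeasure lborel {-pi..pi}"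
      by (rule lborel.emeasure_pair_measure_Times) auto
    moreover have "space M \<times> {-pi..pi} \<inter> space (M \<Otimes>\<^sub>M lborel) = space M \<times> {-pi..pi}"
      by (auto simp: space_pair_measure)
    ultimately show "emeasure (M \<Otimes>\<^sub>M lborel) (space M \<times> {-pi..pi} \<inter> space (M \<Otimes>\<^sub>M lborel)) < \<infinity>"
      by (simp add: emeasure_space_1 ennreal_mult_less_top)
  qed
  have fi: "integrable (M \<Otimes>\<^sub>M lborel) (case_prod f)"
  proof (rule Bochner_Integration.integrable_bound[OF ii fm])
    show "AE x in M \<Otimes>\<^sub>M lborel. norm (case_prod f x) \<le> norm (indicator (space M \<times> {-pi..pi}) x :: real)"
      by (intro AE_I2) (auto simp: f_def space_pair_measure indicator_def)
  qed
  have inner1: "(\<integral>\<omega>. f \<omega> \<theta> \<partial>M) = g \<theta>" for \<theta>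
    unfolding f_def g_def by (simp add: cos_S_integral)
  have inner2: "(\<integral>\<theta>. f \<omega> \<theta> \<partial>lborel) = 2 * pi * indicator {\<omega>\<in>space M. S n \<omega> = l} \<omega>" if "\<omega> \<in> space M" for \<omega>
  proof -
    have "(\<integral>\<theta>. f \<omega> \<theta> \<partial>lborel) = (\<integral>\<theta>. indicator {-pi..pi} \<theta> * cos (\<theta> * of_int (S n \<omega> - l)) \<partial>lborel)"
      unfolding f_def by simp
    also have "\<dots> = (if S n \<omega> - l = 0 then 2*pi else 0)"
      by (rule lborel_from_has_integral(2)[OF _ cos_int_integral]) (intro continuous_intros)
    finally show ?thesis using that by (simp add: indicator_def)
  qed
  have "integrable lborel (\<lambda>\<theta>. \<integral>\<omega>. f \<omega> \<theta> \<partial>M)" by (rule integrable_snd[OF fi])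
  then show "integrable lborel g" using inner1 by simp
  have "integral\<^sup>L lborel g = (\<integral>\<theta>. (\<integral>\<omega>. f \<omega> \<theta> \<partial>M) \<partial>lborel)" using inner1 by simp
  also have "\<dots> = (\<integral>\<omega>. (\<integral>\<theta>. f \<omega> \<theta> \<partial>lborel) \<partial>M)" by (rule Fubini_integral[OF fi])
  also have "\<dots> = (\<integral>\<omega>. 2 * pi * indicator {\<omega>\<in>space M. S n \<omega> = l} \<omega> \<partial>M)"
    by (rule Bochner_Integration.integral_cong[OF refl inner2])
  also have "\<dots> = 2 * pi * measure M {\<omega>\<in>space M. S n \<omega> = l}"
  proof -
    have "{\<omega>\<in>space M. S n \<omega> = l} = {\<omega>\<in>space M. real_of_int (S n \<omega>) = real_of_int l}" by simp
    also have "\<dots> \<in> sets M" by measurable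
    finally show ?thesis by simp
  qed
  finally show "integral\<^sup>L lborel g = 2 * pi * measure M {\<omega>\<in>space M. S n \<omega> = l}" .
qed

end

lemma cmod_diff_sq:
  fixes z a :: complex assumes "cmod z = 1" "cmod a = 1"
  shows "(cmod (z - a))\<^sup>2 = 2 - 2 * Re (cnj a * z)"
proof -
  have "(Re z)\<^sup>2 + (Im z)\<^sup>2 = 1" "(Re a)\<^sup>2 + (Im a)\<^sup>2 = 1"
    using assms cmod_power2[of z] cmod_power2[of a] by auto
  then show ?thesis using cmod_power2[of "z - a"] by (simp add: power2_eq_square algebra_simps)
qed

context setting begin

lemma psi_cont: "isCont \<psi> t"
  unfolding continuous_at_sequentially
proof safe
  fix T assume T: "T \<longlonglongrightarrow> t"
  have m: "(\<lambda>\<omega>. cis (x * of_int (X 1 \<omega>))) \<in> borel_measurable M" for x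
  proof -
    have c: "(\<lambda>y::real. cis (x * y)) \<in> borel_measurable borel"
      by (intro borel_measurable_continuous_onI continuous_intros)
    show ?thesis using measurable_compose[OF Xr_meas[of 1] c] by simp
  qed
  show "(\<psi> \<circ> T) \<longlonglongrightarrow> \<psi> t"
    unfolding comp_def \<psi>_def
    by (rule integral_dominated_convergence[where w="\<lambda>_. 1"])
       (auto intro!: tendsto_intros T m m[unfolded One_nat_def])
qed

lemma psi_0: "\<psi> 0 = 1"
  unfolding \<psi>_def by (simp add: prob_space)

lemma psi_le1: "norm (\<psi> t) \<le> 1"
proof -
  have "norm (\<psi> t) \<le> (\<integral>\<omega>. norm (cis (t * of_int (X 1 \<omega>))) \<partial>M)"
    unfolding \<psi>_def by (rule integral_norm_bound)
  then show ?thesis by (simp add: prob_space)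
qed

lemma psi_aperiodic:
  assumes A1: "aperiodic_A1 M (X 1)" and n1: "norm (\<psi> \<theta>) = 1"
  shows "cis (\<theta> * of_int m) = 1"
proof -
  define a where "a = \<psi> \<theta>"
  define Z where "Z = (\<lambda>\<omega>. cis (\<theta> * of_int (X 1 \<omega>)))" 
  have c: "(\<lambda>y::real. cis (\<theta> * y)) \<in> borel_measurable borel"
    by (intro borel_measurable_continuous_onI continuous_intros)
  have Zm[measurable]: "Z \<in> borel_measurable M"
    using measurable_compose[OF Xr_meas[of 1] c] unfolding Z_def by (simp add: comp_def)
  have Zi: "integrable M Z"
  proof (rule integrable_const_bound[where B=1])
    show "AE x in M. norm (Z x) \<le> 1" by (auto simp: Z_def)
  qed (rule Zm)
  have a1: "cmod a = 1" using n1 by (simp add: a_def)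
  have pw: "(cmod (Z \<omega> - a))\<^sup>2 = 2 - 2 * Re (cnj a * Z \<omega>)" for \<omega>
    by (rule cmod_diff_sq) (auto simp: Z_def a1)
  have "(\<integral>\<omega>. (cmod (Z \<omega> - a))\<^sup>2 \<partial>M) = (\<integral>\<omega>. 2 - 2 * Re (cnj a * Z \<omega>) \<partial>M)"
    by (simp add: pw)
  also have "\<dots> = 2 - 2 * Re (cnj a * integral\<^sup>L M Z)"
    using Zi by (simp add: prob_space)
  also have "integral\<^sup>L M Z = a" by (simp add: a_def Z_def \<psi>_def)
  also have "2 - 2 * Re (cnj a * a) = 0"
    using complex_norm_square[of a] a1 by (simp add: mult.commute)
  finally have "(\<integral>\<omega>. (cmod (Z \<omega> - a))\<^sup>2 \<partial>M) = 0" .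
  moreover have "integrable M (\<lambda>\<omega>. (cmod (Z \<omega> - a))\<^sup>2)"
    using Zi by (simp add: pw prob_space)
  ultimately have "AE \<omega> in M. (cmod (Z \<omega> - a))\<^sup>2 = 0"
    by (subst (asm) integral_nonneg_eq_0_iff_AE) auto
  then have AEZ: "AE \<omega> in M. Z \<omega> = a" by eventually_elim simp
  define p where "p k = measure M {\<omega>\<in>space M. X 1 \<omega> = k}" for k
  have supp: "cis (\<theta> * of_int k) = a" if "p k > 0" for k
  proof (rule ccontr)
    assume ne: "cis (\<theta> * of_int k) \<noteq> a"
    have ev: "{\<omega>\<in>space M. X 1 \<omega> = k} \<in> sets M"
    proof -
      have "X 1 -` {k} \<inter> space M \<in> sets M"
        using meas[of 1] by (simp add: measurable_count_space_eq2_countable)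
      moreover have "X 1 -` {k} \<inter> space M = {\<omega>\<in>space M. X 1 \<omega> = k}" by auto
      ultimately show ?thesis by simp
    qed
    have "AE \<omega> in M. \<omega> \<notin> {\<omega>\<in>space M. X 1 \<omega> = k}"
      using AEZ by eventually_elim (use ne in \<open>auto simp: Z_def\<close>)
    then have "p k = 0" unfolding p_def by (subst prob_eq_0[OF ev])
    then show False using that by simp
  qed
  define H where "H = {m::int. cis (\<theta> * of_int m) = 1}"
  have Hg: "0 \<in> H \<and> (\<forall>x\<in>H. \<forall>y\<in>H. x - y \<in> H)"
    unfolding H_def by (auto simp: algebra_simps cis_divide[symmetric])
  have gen: "int_subgroup_generated {y + k | k. p k > 0} = UNIV" for y
    using A1 unfolding aperiodic_A1_def p_def by (rule allE)
  have subH: "int_subgroup_generated A \<subseteq> G" if "0 \<in> G" "\<forall>x\<in>G. \<forall>y\<in>G. x - y \<in> G" "A \<subseteq> G" for A G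
  proof -
    have "G \<in> {H. 0 \<in> H \<and> (\<forall>x\<in>H. \<forall>y\<in>H. x - y \<in> H) \<and> A \<subseteq> H}" using that by simp
    then show ?thesis unfolding int_subgroup_generated_def by (rule Inter_lower)
  qed
  obtain k0 where k0: "p k0 > 0"
  proof (cases "\<exists>k0. p k0 > 0")
    case False
    then have e: "{0 + k | k. p k > 0} = {}" by auto
    have "int_subgroup_generated {0 + k | k. p k > 0} \<subseteq> {0}"
      unfolding e by (rule subH) auto
    then have "(1::int) \<in> {0}" using gen[of 0] by (metis UNIV_I subsetD)
    then show ?thesis by simp
  qed blast
  have "{-k0 + k | k. p k > 0} \<subseteq> H"
  proof safe
    fix k assume "p k > 0"
    have "a \<noteq> 0" using a1 by auto
    then show "-k0 + k \<in> H" unfolding H_def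
      using supp[OF \<open>p k > 0\<close>] supp[OF k0]
      by (simp add: algebra_simps cis_divide[symmetric])
  qed
  then have "int_subgroup_generated {-k0 + k | k. p k > 0} \<subseteq> H" using Hg by (intro subH) auto
  then have "UNIV \<subseteq> H" using gen[of "-k0"] by simp
  then show ?thesis unfolding H_def by blast
qed

lemma cis_one_small:
  assumes "cis \<theta> = 1" "\<bar>\<theta>\<bar> \<le> pi" shows "\<theta> = 0"
proof -
  have "cos \<theta> = 1" using assms(1) by (metis cis.sel(1) one_complex.sel(1))
  then obtain m :: int where m: "\<theta> = of_int m * 2 * pi" by (auto simp: cos_one_2pi_int)
  show ?thesis
  proof (cases "m = 0")
    case False
    then have "\<bar>of_int m\<bar> \<ge> (1::real)" by linarith
    then have "\<bar>\<theta>\<bar> \<ge> 2 * pi" using m pi_gt_zero by (simp add: abs_mult)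
    then show ?thesis using assms(2) pi_gt_zero by linarith
  qed (use m in simp)
qed

lemma psi_far:
  assumes A1: "aperiodic_A1 M (X 1)" and r: "0 < r" "r \<le> pi"
  shows "\<exists>\<rho><1. \<forall>\<theta>. r \<le> \<bar>\<theta>\<bar> \<and> \<bar>\<theta>\<bar> \<le> pi \<longrightarrow> norm (\<psi> \<theta>) \<le> \<rho>"
proof -
  define K where "K = {-pi..-r} \<union> {r..pi}"
  have Kc: "compact K" unfolding K_def by (intro compact_Un compact_Icc)
  have Kne: "K \<noteq> {}" using r unfolding K_def by auto
  have cont: "continuous_on K (\<lambda>\<theta>. norm (\<psi> \<theta>))"
    by (intro continuous_at_imp_continuous_on ballI continuous_intros psi_cont)
  obtain x where x: "x \<in> K" "\<forall>y\<in>K. norm (\<psi> y) \<le> norm (\<psi> x)"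
    using continuous_attains_sup[OF Kc Kne cont] by blast
  have "norm (\<psi> x) \<noteq> 1"
  proof
    assume "norm (\<psi> x) = 1"
    then have "cis (x * of_int 1) = 1" by (rule psi_aperiodic[OF A1])
    then have "x = 0" using x(1) r unfolding K_def by (intro cis_one_small) auto
    then show False using x(1) r unfolding K_def by auto
  qed
  then have "norm (\<psi> x) < 1" using psi_le1[of x] by linarith
  moreover have "\<forall>\<theta>. r \<le> \<bar>\<theta>\<bar> \<and> \<bar>\<theta>\<bar> \<le> pi \<longrightarrow> norm (\<psi> \<theta>) \<le> norm (\<psi> x)"
  proof safe
    fix \<theta> assume "r \<le> \<bar>\<theta>\<bar>" "\<bar>\<theta>\<bar> \<le> pi"
    then have "\<theta> \<in> K" unfolding K_def by (cases "\<theta> \<ge> 0") auto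
    then show "norm (\<psi> \<theta>) \<le> norm (\<psi> x)" using x(2) by blast
  qed
  ultimately show ?thesis by blast
qed

end

lemma near_bound:
  fixes \<psi> :: "real \<Rightarrow> complex" and a K \<epsilon> r \<theta> :: real and n :: nat
  assumes a: "a > 0" and K: "K \<ge> 0" and eps: "0 < \<epsilon>" "\<epsilon> \<le> 1"
    and r: "0 < r" "r \<le> 1" "a * r \<le> 1" "K * r powr \<epsilon> \<le> a / 4"
    and bnd: "\<And>\<theta>. \<bar>\<theta>\<bar> \<le> r \<Longrightarrow> norm (\<psi> \<theta> - (1 - of_real (a * \<bar>\<theta>\<bar>))) \<le> K * \<bar>\<theta>\<bar> powr (1 + \<epsilon>)"
    and n: "n \<ge> 2" and th: "\<bar>\<theta>\<bar> \<le> r"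
  shows "norm (\<psi> \<theta> ^ n - of_real (exp (-(a * n) * \<bar>\<theta>\<bar>)))
          \<le> (K + a\<^sup>2 / 2) * (1 / (a/8) + 2 / (a/8)\<^sup>2) * real n powr (-\<epsilon>) * exp (-(a/8 * n) * \<bar>\<theta>\<bar>)"
proof -
  define t where "t = \<bar>\<theta>\<bar>"
  define s where "s = 1 + \<epsilon>"
  define b where "b = a / 8"
  define B where "B = exp (-(a * t / 2))"
  define E where "E = exp (-(a * t))"
  define K' where "K' = K + a\<^sup>2 / 2"
  have t0: "t \<ge> 0" and tr: "t \<le> r" using th by (auto simp: t_def)
  have t1: "t \<le> 1" using tr r by linarith
  have b0: "b > 0" using a by (simp add: b_def)
  have bn: "norm (\<psi> \<theta> - (1 - of_real (a * t))) \<le> K * t powr s" using bnd[OF th] by (simp add: t_def s_def)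
  have i: "t powr s \<le> t * r powr \<epsilon>"
  proof (cases "t = 0")
    case True then show ?thesis by simp
  next
    case False
    then have "t powr s = t * t powr \<epsilon>" using t0 by (simp add: s_def powr_add)
    also have "\<dots> \<le> t * r powr \<epsilon>" using t0 tr eps by (intro mult_left_mono powr_mono2) auto
    finally show ?thesis .
  qed
  have Kts: "K * t powr s \<le> a * t / 4"
  proof -
    have "K * t powr s \<le> K * (t * r powr \<epsilon>)" using i K by (rule mult_left_mono)
    also have "\<dots> = t * (K * r powr \<epsilon>)" by simp
    also have "\<dots> \<le> t * (a / 4)" using r(4) t0 by (rule mult_left_mono)
    finally show ?thesis by (simp add: mult.commute)
  qed
  have at1: "a * t \<le> 1" using a tr r(3) by (meson less_imp_le mult_left_mono order_trans)
  have n1: "norm (1 - complex_of_real (a * t)) = 1 - a * t"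
  proof -
    have "1 - complex_of_real (a * t) = complex_of_real (1 - a * t)" by simp
    then show ?thesis using at1 by (simp only: norm_of_real)
  qed
  have psiB: "norm (\<psi> \<theta>) \<le> B"
  proof -
    have "norm (\<psi> \<theta>) \<le> norm (1 - complex_of_real (a * t)) + norm (\<psi> \<theta> - (1 - of_real (a * t)))"
      by (metis add.commute diff_add_cancel norm_triangle_ineq)
    also have "\<dots> \<le> 1 - a * t + a * t / 4" using n1 bn Kts by linarith
    also have "\<dots> \<le> 1 + (-(a * t / 2))" using a t0 by simp
    also have "\<dots> \<le> B" unfolding B_def by (rule exp_ge_add_one_self)
    finally show ?thesis .
  qed
  have EB: "norm (complex_of_real E) \<le> B" unfolding E_def B_def using a t0 by simp
  have t2: "t\<^sup>2 \<le> t powr s"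
  proof (cases "t = 0")
    case True then show ?thesis by (simp add: s_def)
  next
    case False
    then have "t\<^sup>2 = t powr 2" using t0 by (simp add: powr_numeral)
    also have "\<dots> \<le> t powr s" using t0 t1 eps False by (intro powr_mono') (auto simp: s_def)
    finally show ?thesis .
  qed
  have dE: "norm (\<psi> \<theta> - complex_of_real E) \<le> K' * t powr s"
  proof -
    have "\<psi> \<theta> - complex_of_real E = (\<psi> \<theta> - (1 - of_real (a * t))) + complex_of_real (1 - a * t - exp (-(a*t)))"
      by (simp add: E_def)
    then have "norm (\<psi> \<theta> - complex_of_real E) \<le> norm (\<psi> \<theta> - (1 - of_real (a * t))) + \<bar>1 - a * t - exp (-(a*t))\<bar>"
      by (metis norm_of_real norm_triangle_ineq)
    also have "\<dots> \<le> K * t powr s + (a * t)\<^sup>2 / 2"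
      using bn exp_neg_quad[of "a * t"] a t0 by simp
    also have "(a * t)\<^sup>2 / 2 \<le> a\<^sup>2 / 2 * t powr s"
      using t2 a by (simp add: power_mult_distrib)
    finally show ?thesis unfolding K'_def by (simp add: algebra_simps)
  qed
  have En: "complex_of_real (exp (-(a * n) * \<bar>\<theta>\<bar>)) = complex_of_real E ^ n"
  proof -
    have "exp (-(a * n) * \<bar>\<theta>\<bar>) = exp (real n * (-(a * t)))" by (simp add: t_def algebra_simps)
    also have "\<dots> = E ^ n" unfolding E_def by (rule exp_of_nat_mult)
    finally show ?thesis by simp
  qed
  have "norm (\<psi> \<theta> ^ n - complex_of_real E ^ n) \<le> real n * B ^ (n - 1) * norm (\<psi> \<theta> - complex_of_real E)"
    using norm_power_diff_le[OF psiB EB, of "n - 1"] n by simp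
  also have "\<dots> \<le> real n * B ^ (n - 1) * (K' * t powr s)"
    using dE by (intro mult_left_mono) (auto simp: B_def)
  also have "B ^ (n - 1) \<le> exp (-(2 * b * n * t))"
  proof -
    have "B ^ (n - 1) = exp (real (n - 1) * (-(a * t / 2)))" unfolding B_def by (rule exp_of_nat_mult[symmetric])
    also have "\<dots> \<le> exp (-(2 * b * n * t))"
    proof -
      have "real (n - 1) \<ge> real n / 2" using n by linarith
      then have "real (n - 1) * (a * t / 2) \<ge> real n / 2 * (a * t / 2)"
        using a t0 by (intro mult_right_mono) auto
      then show ?thesis unfolding b_def by (simp add: algebra_simps)
    qed
    finally show ?thesis .
  qed
  then have "real n * B ^ (n - 1) * (K' * t powr s) \<le> real n * exp (-(2 * b * n * t)) * (K' * t powr s)"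
    using t0 K by (intro mult_right_mono mult_left_mono) (auto simp: K'_def)
  also have "\<dots> = K' * (real n * real n powr (-s)) * (((n * t) powr s) * exp (-(b * (n * t)))) * exp (-(b * n * t))"
  proof -
    have "(n * t) powr s = real n powr s * t powr s" using t0 by (simp add: powr_mult)
    moreover have "real n powr (-s) * real n powr s = 1" using n by (simp add: powr_add[symmetric])
    moreover have "exp (-(2 * b * n * t)) = exp (-(b * (n * t))) * exp (-(b * n * t))"
      by (simp add: exp_add[symmetric] algebra_simps)
    ultimately show ?thesis by (simp add: algebra_simps)
  qed
  also have "real n * real n powr (-s) = real n powr (-\<epsilon>)"
  proof -
    have e: "real n powr (1 + (-s)) = real n powr 1 * real n powr (-s)" by (rule powr_add)
    have "real n powr 1 = real n" using n by simp
    then have "real n * real n powr (-s) = real n powr (1 + (-s))" using e by simp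
    then show ?thesis by (simp add: s_def)
  qed
  also have "((n * t) powr s) * exp (-(b * (n * t))) \<le> 1/b + 2/b\<^sup>2"
    using powr_exp_bound[of "n * t" b s] t0 b0 eps by (simp add: s_def)
  then have "K' * real n powr (-\<epsilon>) * (((n * t) powr s) * exp (-(b * (n * t)))) * exp (-(b * n * t))
      \<le> K' * real n powr (-\<epsilon>) * (1/b + 2/b\<^sup>2) * exp (-(b * n * t))"
    using K by (intro mult_right_mono mult_left_mono) (auto simp: K'_def)
  finally show ?thesis using En unfolding K'_def b_def t_def by (simp add: algebra_simps add_divide_distrib)
qed

lemma eventually_n_rho:
  fixes \<rho> \<delta> :: real assumes "0 \<le> \<rho>" "\<rho> < 1" "0 \<le> \<delta>" "\<delta> \<le> 1"
  shows "\<exists>N. \<forall>n\<ge>N. real n * \<rho> ^ n \<le> real n powr (-\<delta>)"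
proof -
  define q where "q = sqrt \<rho>"
  have q: "norm q < 1" using assms by (simp add: q_def real_sqrt_lt_1_iff)
  have "(\<lambda>n. of_nat n * q ^ n) \<longlonglongrightarrow> 0" by (rule powser_times_n_limit_0[OF q])
  then have "(\<lambda>n. (of_nat n * q ^ n)\<^sup>2) \<longlonglongrightarrow> 0" using tendsto_power[of _ 0 _ 2] by fastforce
  then have "eventually (\<lambda>n. (of_nat n * q ^ n)\<^sup>2 < 1) sequentially"
    by (rule order_tendstoD) simp
  then obtain N where N: "\<And>n. n \<ge> N \<Longrightarrow> (real n * q ^ n)\<^sup>2 < 1" by (auto simp: eventually_sequentially)
  show ?thesis
  proof (intro exI[of _ "Suc N"] allI impI)
    fix n assume n: "Suc N \<le> n"
    have np: "real n > 0" using n by simp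
    have e: "(real n * q ^ n)\<^sup>2 = real n ^ 2 * \<rho> ^ n"
    proof -
      have "(q ^ n)\<^sup>2 = (q\<^sup>2) ^ n" by (metis power_mult mult.commute)
      also have "q\<^sup>2 = \<rho>" using assms by (simp add: q_def)
      finally show ?thesis by (simp add: power_mult_distrib)
    qed
    have "real n powr (1 + \<delta>) \<le> real n powr 2" using n assms by (intro powr_mono) auto
    also have "\<dots> = real n ^ 2" using np by (simp add: powr_numeral)
    finally have "real n powr (1 + \<delta>) * \<rho> ^ n \<le> real n ^ 2 * \<rho> ^ n"
      using assms by (intro mult_right_mono) auto
    also have "\<dots> \<le> 1" using N[of n] n e by simp
    finally have h: "real n powr (1 + \<delta>) * \<rho> ^ n \<le> 1" .
    have "real n powr (1 + \<delta>) = real n * real n powr \<delta>" using np by (simp add: powr_add)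
    with h have "real n * \<rho> ^ n * real n powr \<delta> \<le> 1" by (simp add: algebra_simps)
    then show "real n * \<rho> ^ n \<le> real n powr (-\<delta>)"
      using np by (simp add: powr_minus field_simps)
  qed
qed

context setting begin

lemma pointwise_bound:
  fixes a K \<epsilon> r \<rho> :: real and n :: nat
  assumes a: "a > 0" and K: "K \<ge> 0" and eps: "0 < \<epsilon>" "\<epsilon> \<le> 1"
    and r: "0 < r" "r \<le> 1" "a * r \<le> 1" "K * r powr \<epsilon> \<le> a / 4"
    and bnd: "\<And>\<theta>. \<bar>\<theta>\<bar> \<le> r \<Longrightarrow> norm (\<psi> \<theta> - (1 - of_real (a * \<bar>\<theta>\<bar>))) \<le> K * \<bar>\<theta>\<bar> powr (1 + \<epsilon>)"
    and far: "\<And>\<theta>. r \<le> \<bar>\<theta>\<bar> \<Longrightarrow> \<bar>\<theta>\<bar> \<le> pi \<Longrightarrow> norm (\<psi> \<theta>) \<le> \<rho>"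
    and rho: "exp (-(a * r)) \<le> \<rho>"
    and n: "n \<ge> 2" and th: "\<bar>\<theta>\<bar> \<le> pi"
  shows "norm (\<psi> \<theta> ^ n - of_real (exp (-(a * n) * \<bar>\<theta>\<bar>)))
          \<le> (K + a\<^sup>2 / 2) * (1 / (a/8) + 2 / (a/8)\<^sup>2) * real n powr (-\<epsilon>) * exp (-(a/8 * n) * \<bar>\<theta>\<bar>) + 2 * \<rho> ^ n"
proof (cases "\<bar>\<theta>\<bar> \<le> r")
  case True
  have r0: "\<rho> \<ge> 0" using rho by (meson exp_ge_zero order_trans)
  have "norm (\<psi> \<theta> ^ n - of_real (exp (-(a * n) * \<bar>\<theta>\<bar>)))
          \<le> (K + a\<^sup>2 / 2) * (1 / (a/8) + 2 / (a/8)\<^sup>2) * real n powr (-\<epsilon>) * exp (-(a/8 * n) * \<bar>\<theta>\<bar>)"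
    by (rule near_bound[OF a K eps r bnd n True])
  then show ?thesis using r0 by (smt (verit) zero_le_power)
next
  case False
  have r0: "\<rho> \<ge> 0" using rho by (meson exp_ge_zero order_trans)
  have "norm (\<psi> \<theta> ^ n) \<le> \<rho> ^ n"
    unfolding norm_power using far[of \<theta>] False th by (intro power_mono) auto
  moreover have "norm (complex_of_real (exp (-(a * n) * \<bar>\<theta>\<bar>))) \<le> \<rho> ^ n"
  proof -
    have "exp (-(a * n) * \<bar>\<theta>\<bar>) = exp (real n * (-(a * \<bar>\<theta>\<bar>)))" by (simp add: algebra_simps)
    also have "\<dots> = exp (-(a * \<bar>\<theta>\<bar>)) ^ n" by (rule exp_of_nat_mult)
    also have "\<dots> \<le> \<rho> ^ n"
    proof (intro power_mono)
      have "exp (-(a * \<bar>\<theta>\<bar>)) \<le> exp (-(a * r))" using False a by simp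
      then show "exp (-(a * \<bar>\<theta>\<bar>)) \<le> \<rho>" using rho by linarith
    qed simp
    finally show ?thesis by simp
  qed
  ultimately have "norm (\<psi> \<theta> ^ n - of_real (exp (-(a * n) * \<bar>\<theta>\<bar>))) \<le> 2 * \<rho> ^ n"
    using norm_triangle_ineq4[of "\<psi> \<theta> ^ n" "of_real (exp (-(a * n) * \<bar>\<theta>\<bar>))"] by simp
  moreover have "(K + a\<^sup>2 / 2) * (1 / (a/8) + 2 / (a/8)\<^sup>2) * real n powr (-\<epsilon>) * exp (-(a/8 * n) * \<bar>\<theta>\<bar>) \<ge> 0"
    using K a by (intro mult_nonneg_nonneg) auto
  ultimately show ?thesis by linarith
qed


lemma fixed_n_est:
  fixes a K \<epsilon> r \<rho> :: real and n :: nat and l :: int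
  assumes a: "a > 0" and K: "K \<ge> 0" and eps: "0 < \<epsilon>" "\<epsilon> \<le> 1"
    and r: "0 < r" "r \<le> 1" "a * r \<le> 1" "K * r powr \<epsilon> \<le> a / 4"
    and bnd: "\<And>\<theta>. \<bar>\<theta>\<bar> \<le> r \<Longrightarrow> norm (\<psi> \<theta> - (1 - of_real (a * \<bar>\<theta>\<bar>))) \<le> K * \<bar>\<theta>\<bar> powr (1 + \<epsilon>)"
    and far: "\<And>\<theta>. r \<le> \<bar>\<theta>\<bar> \<Longrightarrow> \<bar>\<theta>\<bar> \<le> pi \<Longrightarrow> norm (\<psi> \<theta>) \<le> \<rho>"
    and rho: "exp (-(a * r)) \<le> \<rho>"
    and n: "n \<ge> 2"
  shows "\<bar>real n * measure M {\<omega>\<in>space M. S n \<omega> = l} - (1 / pi) * (a / (a\<^sup>2 + (real_of_int l / real n)\<^sup>2))\<bar>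
     \<le> (K + a\<^sup>2 / 2) * (1 / (a/8) + 2 / (a/8)\<^sup>2) / (pi * (a/8)) * real n powr (-\<epsilon>)
        + 2 * (real n * \<rho> ^ n) + 1 / (pi\<^sup>2 * a\<^sup>2) * (1 / real n)"
proof -
  define b where "b = a / 8"
  define A where "A = (K + a\<^sup>2 / 2) * (1 / b + 2 / b\<^sup>2)"
  define P where "P = measure M {\<omega>\<in>space M. S n \<omega> = l}"
  define G where "G = (\<lambda>\<theta>. indicator {-pi..pi} \<theta> * Re (cis (-\<theta> * of_int l) * \<psi> \<theta> ^ n))"
  define H where "H = (\<lambda>\<theta>. indicator {-pi..pi} \<theta> * (exp (-(a * n) * \<bar>\<theta>\<bar>) * cos (\<theta> * of_int l)))"
  define g where "g = (\<lambda>\<theta>. A * real n powr (-\<epsilon>) * (exp (-(b * n) * \<bar>\<theta>\<bar>) * cos (\<theta> * of_int 0)) + 2 * \<rho> ^ n)"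
  define gb where "gb = (\<lambda>\<theta>. indicator {-pi..pi} \<theta> * g \<theta>)"
  define VH where "VH = 2 * (a * n) * (1 - exp (-(a * n) * pi) * cos (of_int l * pi)) / ((a * n)\<^sup>2 + (of_int l)\<^sup>2)"
  define Ig where "Ig = A * real n powr (-\<epsilon>) * (2 * (b * n) * (1 - exp (-(b * n) * pi) * cos (of_int 0 * pi)) / ((b * n)\<^sup>2 + (of_int 0)\<^sup>2))
       + Henstock_Kurzweil_Integration.content {-pi..pi} *\<^sub>R (2 * \<rho> ^ n)"
  have np: "real n > 0" using n by simp
  have b0: "b > 0" using a by (simp add: b_def)
  have an: "a * n > 0" using a np by simp
  have bn: "b * n > 0" using b0 np by simp
  have r0: "\<rho> \<ge> 0" using rho by (meson exp_ge_zero order_trans)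
  have A0: "A \<ge> 0" using K b0 by (simp add: A_def)
  have G: "integrable lborel G" "integral\<^sup>L lborel G = 2 * pi * P"
    unfolding G_def P_def using fubini_rep[of l n] by auto
  have Hi: "integrable lborel H" "integral\<^sup>L lborel H = VH"
    unfolding H_def VH_def
    by (rule lborel_from_has_integral[OF _ cos_exp_int[OF an]], intro continuous_intros)+
  have gi: "integrable lborel gb" "integral\<^sup>L lborel gb = Ig"
    unfolding gb_def g_def Ig_def
    by (rule lborel_from_has_integral[OF _ has_integral_add[OF has_integral_mult_right[OF cos_exp_int[OF bn]] has_integral_const_real]],
        intro continuous_intros)+
  have pw: "\<bar>G \<theta> - H \<theta>\<bar> \<le> gb \<theta>" for \<theta>
  proof (cases "\<theta> \<in> {-pi..pi}")
    case False then show ?thesis by (simp add: G_def H_def gb_def)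
  next
    case True
    then have th: "\<bar>\<theta>\<bar> \<le> pi" by auto
    define c where "c = cis (-\<theta> * of_int l)"
    define E where "E = exp (-(a * n) * \<bar>\<theta>\<bar>)"
    have "exp (-(a * n) * \<bar>\<theta>\<bar>) * cos (\<theta> * of_int l) = Re (c * of_real E)"
      by (simp add: c_def E_def mult.commute)
    then have "G \<theta> - H \<theta> = Re (c * (\<psi> \<theta> ^ n - of_real E))"
      using True by (simp add: G_def H_def c_def E_def algebra_simps)
    then have "\<bar>G \<theta> - H \<theta>\<bar> \<le> norm (c * (\<psi> \<theta> ^ n - of_real E))"
      using abs_Re_le_cmod[of "c * (\<psi> \<theta> ^ n - of_real E)"] by (simp only:)
    also have "\<dots> = norm (\<psi> \<theta> ^ n - of_real E)" by (simp add: c_def norm_mult)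
    also have "\<dots> \<le> A * real n powr (-\<epsilon>) * exp (-(b * n) * \<bar>\<theta>\<bar>) + 2 * \<rho> ^ n"
      unfolding E_def A_def b_def using pointwise_bound[OF a K eps r bnd far rho n th] by simp
    also have "\<dots> = gb \<theta>" using True by (simp add: gb_def g_def)
    finally show ?thesis .
  qed
  have "\<bar>2 * pi * P - VH\<bar> \<le> Ig"
  proof -
    have "\<bar>integral\<^sup>L lborel (\<lambda>\<theta>. G \<theta> - H \<theta>)\<bar> \<le> integral\<^sup>L lborel gb"
      by (rule integral_abs_bound_integral) (use G Hi gi pw in auto)
    then show ?thesis using G Hi gi by simp
  qed
  moreover have "Ig \<le> A * real n powr (-\<epsilon>) * (2 / (b * n)) + 4 * pi * \<rho> ^ n"
  proof -
    have "2 * (b * n) * (1 - exp (-(b * n) * pi) * cos (of_int 0 * pi)) / ((b * n)\<^sup>2 + (of_int 0)\<^sup>2)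
        = 2 * (1 - exp (-(b * n) * pi)) / (b * n)"
      using bn by (simp add: power2_eq_square)
    also have "\<dots> \<le> 2 / (b * n)" using bn by (simp add: divide_right_mono)
    finally have "A * real n powr (-\<epsilon>) * (2 * (b * n) * (1 - exp (-(b * n) * pi) * cos (of_int 0 * pi)) / ((b * n)\<^sup>2 + (of_int 0)\<^sup>2))
        \<le> A * real n powr (-\<epsilon>) * (2 / (b * n))" using A0 by (intro mult_left_mono) auto
    moreover have "Henstock_Kurzweil_Integration.content {-pi..pi} *\<^sub>R (2 * \<rho> ^ n) = 4 * pi * \<rho> ^ n" by simp
    ultimately show ?thesis unfolding Ig_def by linarith
  qed
  ultimately have I: "\<bar>2 * pi * P - VH\<bar> \<le> A * real n powr (-\<epsilon>) * (2 / (b * n)) + 4 * pi * \<rho> ^ n"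
    by linarith
  define T where "T = (1 / pi) * (a / (a\<^sup>2 + (real_of_int l / real n)\<^sup>2))"
  define q where "q = exp (-(a * n) * pi) * cos (of_int l * pi)"
  have VHT: "real n / (2 * pi) * VH = T * (1 - q)"
  proof -
    define D where "D = (a * n)\<^sup>2 + (of_int l)\<^sup>2"
    have D0: "D > 0" unfolding D_def using an np by (intro add_pos_nonneg) auto
    have VHeq: "VH = 2 * (a * n) * (1 - q) / D"
      unfolding VH_def q_def D_def by (rule refl)
    have d2: "a\<^sup>2 + (real_of_int l / real n)\<^sup>2 > 0" using a by (intro add_pos_nonneg) auto
    have Teq: "T = a * (real n)\<^sup>2 / (pi * D)"
    proof -
      have "a\<^sup>2 + (real_of_int l / real n)\<^sup>2 = D / (real n)\<^sup>2"
        unfolding D_def using np by (simp add: field_simps power2_eq_square)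
      then show ?thesis unfolding T_def using np D0 by (simp add: field_simps)
    qed
    show ?thesis unfolding Teq VHeq using D0 np by (simp add: field_simps power2_eq_square)
  qed
  have T0: "T \<ge> 0" "T \<le> 1 / (pi * a)"
  proof -
    show "T \<ge> 0" unfolding T_def using a by simp
    have "a / (a\<^sup>2 + (real_of_int l / real n)\<^sup>2) \<le> a / a\<^sup>2"
      using a by (intro divide_left_mono) (auto simp: add_pos_nonneg)
    also have "\<dots> = 1 / a" using a by (simp add: power2_eq_square)
    finally have "(1 / pi) * (a / (a\<^sup>2 + (real_of_int l / real n)\<^sup>2)) \<le> (1 / pi) * (1 / a)"
      by (intro mult_left_mono) auto
    then show "T \<le> 1 / (pi * a)" unfolding T_def by simp
  qed
  have qb: "\<bar>q\<bar> \<le> 1 / (a * n * pi)"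
  proof -
    have "\<bar>q\<bar> \<le> exp (-(a * n) * pi)" unfolding q_def by (simp add: abs_mult mult_left_le)
    also have "exp (-(a * n) * pi) = 1 / exp (a * n * pi)" by (simp add: exp_minus inverse_eq_divide)
    also have "\<dots> \<le> 1 / (a * n * pi)"
    proof -
      have "a * n * pi > 0" using an by simp
      moreover have "a * n * pi \<le> exp (a * n * pi)" using exp_ge_add_one_self[of "a * n * pi"] by linarith
      ultimately show ?thesis by (intro divide_left_mono) auto
    qed
    finally show ?thesis .
  qed
  have e1: "real n / (2 * pi) * (2 * pi * P - VH) = real n * P - real n / (2 * pi) * VH"
    by (simp add: right_diff_distrib)
  have e2: "T * (1 - q) = T - T * q" by (simp add: right_diff_distrib)
  have e3: "real n * P - T = real n / (2 * pi) * (2 * pi * P - VH) - T * q"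
    using e1 e2 VHT by linarith
  have a1: "\<bar>real n / (2 * pi) * (2 * pi * P - VH)\<bar> = real n / (2 * pi) * \<bar>2 * pi * P - VH\<bar>"
    using np by (simp add: abs_mult)
  have a2: "\<bar>T * q\<bar> = T * \<bar>q\<bar>" using T0 by (simp add: abs_mult)
  have "\<bar>real n * P - T\<bar> \<le> real n / (2 * pi) * \<bar>2 * pi * P - VH\<bar> + T * \<bar>q\<bar>"
    unfolding e3 using abs_triangle_ineq4[of "real n / (2 * pi) * (2 * pi * P - VH)" "T * q"] a1 a2 by linarith
  also have "\<dots> \<le> real n / (2 * pi) * (A * real n powr (-\<epsilon>) * (2 / (b * n)) + 4 * pi * \<rho> ^ n)
                  + 1 / (pi * a) * (1 / (a * n * pi))"
    using I T0 qb np a by (intro add_mono mult_left_mono mult_mono) auto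
  also have "\<dots> = A / (pi * b) * real n powr (-\<epsilon>) + 2 * (real n * \<rho> ^ n) + 1 / (pi\<^sup>2 * a\<^sup>2) * (1 / real n)"
    using np b0 a by (simp add: field_simps power2_eq_square)
  finally show ?thesis unfolding P_def T_def A_def b_def .
qed

end

context setting begin

lemma main_est:
  fixes a K \<epsilon> r0 :: real
  assumes A1: "aperiodic_A1 M (X 1)" and a: "a > 0" and K: "K \<ge> 0" and eps: "0 < \<epsilon>" "\<epsilon> \<le> 1"
    and r0: "r0 > 0"
    and bnd0: "\<And>\<theta>. \<bar>\<theta>\<bar> < r0 \<Longrightarrow> norm (\<psi> \<theta> - (1 - of_real (a * \<bar>\<theta>\<bar>))) \<le> K * \<bar>\<theta>\<bar> powr (1 + \<epsilon>)"
  shows "\<exists>C>0. \<exists>N::nat. \<forall>n\<ge>N. \<forall>l::int.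
     \<bar>real n * measure M {\<omega>\<in>space M. S n \<omega> = l} - (1 / pi) * (a / (a\<^sup>2 + (real_of_int l / real n)\<^sup>2))\<bar>
       \<le> C * real n powr (-(\<epsilon>/2))"
proof -
  define q where "q = a / (4 * (K + 1))"
  define r where "r = min (r0/2) (min 1 (min (1/a) (q powr (1/\<epsilon>))))"
  have q0: "q > 0" using a K by (simp add: q_def)
  have rpos: "0 < r" using r0 a q0 by (simp add: r_def)
  have r1: "r \<le> 1" by (simp add: r_def)
  have rr0: "r < r0" using r0 by (simp add: r_def)
  have ar: "a * r \<le> 1"
  proof -
    have "r \<le> 1 / a" by (simp add: r_def)
    then have "a * r \<le> a * (1 / a)" using a by (intro mult_left_mono) auto
    then show ?thesis using a by simp
  qed
  have Kr: "K * r powr \<epsilon> \<le> a / 4"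
  proof -
    have "r \<le> q powr (1/\<epsilon>)" by (simp add: r_def)
    then have "r powr \<epsilon> \<le> (q powr (1/\<epsilon>)) powr \<epsilon>" using rpos eps by (intro powr_mono2) auto
    also have "\<dots> = q" using eps q0 by (simp add: powr_powr)
    finally have rq: "r powr \<epsilon> \<le> q" .
    have "K * r powr \<epsilon> \<le> (K + 1) * r powr \<epsilon>" by (simp add: algebra_simps)
    also have "\<dots> \<le> (K + 1) * q" using rq K by (intro mult_left_mono) auto
    also have "\<dots> = a / 4" unfolding q_def using K by (simp add: field_simps)
    finally show ?thesis .
  qed
  have bnd: "\<And>\<theta>. \<bar>\<theta>\<bar> \<le> r \<Longrightarrow> norm (\<psi> \<theta> - (1 - of_real (a * \<bar>\<theta>\<bar>))) \<le> K * \<bar>\<theta>\<bar> powr (1 + \<epsilon>)"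
  proof -
    fix \<theta> :: real assume "\<bar>\<theta>\<bar> \<le> r"
    then have "\<bar>\<theta>\<bar> < r0" using rr0 by linarith
    then show "norm (\<psi> \<theta> - (1 - of_real (a * \<bar>\<theta>\<bar>))) \<le> K * \<bar>\<theta>\<bar> powr (1 + \<epsilon>)" by (rule bnd0)
  qed
  have rpi: "r \<le> pi" using r1 pi_gt3 by linarith
  obtain \<rho>1 where \<rho>1: "\<rho>1 < 1" "\<forall>\<theta>. r \<le> \<bar>\<theta>\<bar> \<and> \<bar>\<theta>\<bar> \<le> pi \<longrightarrow> norm (\<psi> \<theta>) \<le> \<rho>1"
    using psi_far[OF A1 rpos rpi] by blast
  define \<rho> where "\<rho> = max \<rho>1 (exp (-(a * r)))"
  have far: "\<And>\<theta>. r \<le> \<bar>\<theta>\<bar> \<Longrightarrow> \<bar>\<theta>\<bar> \<le> pi \<Longrightarrow> norm (\<psi> \<theta>) \<le> \<rho>"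
  proof -
    fix \<theta> :: real assume h: "r \<le> \<bar>\<theta>\<bar>" "\<bar>\<theta>\<bar> \<le> pi"
    then have "norm (\<psi> \<theta>) \<le> \<rho>1" using \<rho>1(2) by blast
    then show "norm (\<psi> \<theta>) \<le> \<rho>" unfolding \<rho>_def by linarith
  qed
  have rho: "exp (-(a * r)) \<le> \<rho>" by (simp add: \<rho>_def)
  have rho0: "0 \<le> \<rho>" using rho by (meson exp_ge_zero order_trans)
  have rho1: "\<rho> < 1" unfolding \<rho>_def using \<rho>1(1) a rpos by simp
  obtain N0 where N0: "\<And>n. n \<ge> N0 \<Longrightarrow> real n * \<rho> ^ n \<le> real n powr (-(\<epsilon>/2))"
    using eventually_n_rho[OF rho0 rho1, of "\<epsilon>/2"] eps by auto
  define A where "A = (K + a\<^sup>2 / 2) * (1 / (a/8) + 2 / (a/8)\<^sup>2) / (pi * (a/8))"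
  have A0: "A \<ge> 0" using K a by (simp add: A_def)
  define C where "C = A + 2 + 1 / (pi\<^sup>2 * a\<^sup>2)"
  have C0: "C > 0" using A0 a by (simp add: C_def add_nonneg_pos)
  show ?thesis
  proof (intro exI[of _ C] conjI C0 exI[of _ "max 2 N0"] allI impI)
    fix n :: nat and l :: int assume nN: "max 2 N0 \<le> n"
    then have n2: "n \<ge> 2" and nN0: "n \<ge> N0" by auto
    have np: "real n \<ge> 1" using n2 by simp
    have p1: "real n powr (-\<epsilon>) \<le> real n powr (-(\<epsilon>/2))" using np eps by (intro powr_mono) auto
    have p2: "1 / real n \<le> real n powr (-(\<epsilon>/2))"
    proof -
      have "real n powr (-1) \<le> real n powr (-(\<epsilon>/2))" using np eps by (intro powr_mono) auto
      moreover have "real n powr (-1) = 1 / real n" using np by (simp add: powr_minus_divide)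
      ultimately show ?thesis by linarith
    qed
    have "\<bar>real n * measure M {\<omega>\<in>space M. S n \<omega> = l} - (1 / pi) * (a / (a\<^sup>2 + (real_of_int l / real n)\<^sup>2))\<bar>
       \<le> A * real n powr (-\<epsilon>) + 2 * (real n * \<rho> ^ n) + 1 / (pi\<^sup>2 * a\<^sup>2) * (1 / real n)"
      unfolding A_def by (rule fixed_n_est[OF a K eps rpos r1 ar Kr bnd far rho n2])
    also have "\<dots> \<le> A * real n powr (-(\<epsilon>/2)) + 2 * real n powr (-(\<epsilon>/2)) + 1 / (pi\<^sup>2 * a\<^sup>2) * real n powr (-(\<epsilon>/2))"
    proof (intro add_mono)
      show "A * real n powr (-\<epsilon>) \<le> A * real n powr (-(\<epsilon>/2))" using p1 A0 by (rule mult_left_mono)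
      show "2 * (real n * \<rho> ^ n) \<le> 2 * real n powr (-(\<epsilon>/2))" using N0[OF nN0] by linarith
      show "1 / (pi\<^sup>2 * a\<^sup>2) * (1 / real n) \<le> 1 / (pi\<^sup>2 * a\<^sup>2) * real n powr (-(\<epsilon>/2))"
        using p2 by (rule mult_left_mono) simp
    qed
    also have "\<dots> = C * real n powr (-(\<epsilon>/2))" by (simp add: C_def algebra_simps)
    finally show "\<bar>real n * measure M {\<omega>\<in>space M. S n \<omega> = l} - (1 / pi) * (a / (a\<^sup>2 + (real_of_int l / real n)\<^sup>2))\<bar>
       \<le> C * real n powr (-(\<epsilon>/2))" .
  qed
qed

end

theorem corollary4:
  fixes M :: "'a measure" and X :: "nat \<Rightarrow> 'a \<Rightarrow> int"
    and c_star \<epsilon> :: real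
  assumes "prob_space M"
    and meas: "\<And>j. j \<ge> 1 \<Longrightarrow> X j \<in> measurable M (count_space UNIV)"
    and indep: "prob_space.indep_vars M (\<lambda>_. count_space UNIV) X {1..}"
    and ident: "\<And>j. j \<ge> 1 \<Longrightarrow>
                  distr M (count_space UNIV) (X j) = distr M (count_space UNIV) (X 1)"
    and A1: "aperiodic_A1 M (X 1)"
    and c_pos: "c_star > 0" and eps_pos: "\<epsilon> > 0"
    and phi_exp: "(\<lambda>\<theta>. int_charfun M (X 1) \<theta> - (1 - complex_of_real (c_star * \<bar>\<theta>\<bar>)))
                    \<in> O[at 0](\<lambda>\<theta>. complex_of_real (\<bar>\<theta>\<bar> powr (1 + \<epsilon>)))"
  shows "\<exists>C2 > 0. \<exists>N2::nat. \<forall>n \<ge> N2. \<forall>l::int.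
           \<bar>real n * measure M {\<omega>\<in>space M. (\<Sum>j\<in>{1..n}. X j \<omega>) = l}
              - (1 / pi) * (c_star / (c_star\<^sup>2 + (real_of_int l / real n)\<^sup>2))\<bar>
           \<le> C2 * real n powr (- min (\<epsilon> / 2) (1 / 2))"
proof -
  interpret setting M X by (rule setting.intro[OF assms(1) meas indep ident])
  have phi: "int_charfun M (X 1) \<theta> = \<psi> \<theta>" for \<theta>
    unfolding \<psi>_def by (rule int_charfun_eq[OF assms(1) meas]) simp
  define e where "e = min \<epsilon> 1"
  have e: "0 < e" "e \<le> 1" "e \<le> \<epsilon>" using eps_pos by (auto simp: e_def)
  obtain c0 where c0: "c0 > 0"
    and ev: "eventually (\<lambda>\<theta>. norm (int_charfun M (X 1) \<theta> - (1 - complex_of_real (c_star * \<bar>\<theta>\<bar>)))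
              \<le> c0 * norm (complex_of_real (\<bar>\<theta>\<bar> powr (1 + \<epsilon>)))) (at 0)"
    using landau_o.bigE[OF phi_exp] by blast
  obtain d where d: "d > 0" and dP: "\<And>\<theta>. \<theta> \<noteq> 0 \<Longrightarrow> dist \<theta> 0 < d \<Longrightarrow>
      norm (int_charfun M (X 1) \<theta> - (1 - complex_of_real (c_star * \<bar>\<theta>\<bar>))) \<le> c0 * norm (complex_of_real (\<bar>\<theta>\<bar> powr (1 + \<epsilon>)))"
    using ev unfolding eventually_at by blast
  define r0 where "r0 = min d 1"
  have r0: "r0 > 0" using d by (simp add: r0_def)
  have bnd0: "norm (\<psi> \<theta> - (1 - of_real (c_star * \<bar>\<theta>\<bar>))) \<le> c0 * \<bar>\<theta>\<bar> powr (1 + e)" if th: "\<bar>\<theta>\<bar> < r0" for \<theta>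
  proof (cases "\<theta> = 0")
    case True then show ?thesis by (simp add: psi_0)
  next
    case False
    have "norm (\<psi> \<theta> - (1 - of_real (c_star * \<bar>\<theta>\<bar>))) \<le> c0 * norm (complex_of_real (\<bar>\<theta>\<bar> powr (1 + \<epsilon>)))"
      using dP[OF False] th unfolding phi r0_def by simp
    also have "\<dots> = c0 * \<bar>\<theta>\<bar> powr (1 + \<epsilon>)" by simp
    also have "\<dots> \<le> c0 * \<bar>\<theta>\<bar> powr (1 + e)"
    proof -
      have "\<bar>\<theta>\<bar> \<le> 1" using th by (simp add: r0_def)
      then have "\<bar>\<theta>\<bar> powr (1 + \<epsilon>) \<le> \<bar>\<theta>\<bar> powr (1 + e)" using e False by (intro powr_mono') auto
      then show ?thesis using c0 by simp
    qed
    finally show ?thesis .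
  qed
  obtain C N where C: "C > 0" and CN: "\<forall>n\<ge>N. \<forall>l::int.
     \<bar>real n * measure M {\<omega>\<in>space M. S n \<omega> = l} - (1 / pi) * (c_star / (c_star\<^sup>2 + (real_of_int l / real n)\<^sup>2))\<bar>
       \<le> C * real n powr (-(e/2))"
    using main_est[OF A1 c_pos less_imp_le[OF c0] e(1,2) r0 bnd0] by blast
  have ee: "-(e/2) = - min (\<epsilon> / 2) (1 / 2)" by (simp add: e_def min_def)
  have final: "\<forall>n\<ge>N. \<forall>l::int.
           \<bar>real n * measure M {\<omega>\<in>space M. (\<Sum>j\<in>{1..n}. X j \<omega>) = l}
              - (1 / pi) * (c_star / (c_star\<^sup>2 + (real_of_int l / real n)\<^sup>2))\<bar>
           \<le> C * real n powr (- min (\<epsilon> / 2) (1 / 2))"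
    using CN unfolding ee S_def .
  show ?thesis using C final by blast
qed

end
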